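(* For every $2+1$-complex $K\subset\mathbb{R}^3$, the set $Extr(K)$ of extremal points of $K$ is finite.
   Context: A horizontal segment is one contained in a plane $\{z=c\}$; a vertical segment is one parallel to the $z$ axis. A $2+1$-complex is a closed subset of $\mathbb{R}^3$ that is the union of a finite list $L$ of elements, each of one of the following kinds: points; relatively open horizontal segments whose two endpoints belong to $L$; relatively open vertical segments whose two endpoints belong to $L$; relatively open triangles in a horizontal plane whose three boundary segments belong to $L$; relatively open rectangles in a vertical plane, two of whose sides are parallel to the $z$ axis, whose four boundary segments belong to $L$; open subsets of $\mathbb{R}^3$ whose boundary is a union of elements of the previous kinds, all belonging to $L$. A point $p\in K$ is extremal if no relatively open horizontal or vertical segment contained in $K$ contains $p$. *)

theory Defs
  imports "HOL-Analysis.Analysis"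
begin

text \<open>Points of R^3 are vectors of type real^3; the z coordinate is component 3.\<close>

definition ez :: "real^3" where "ez = axis 3 1"

definition is_point_cell :: "(real^3) set \<Rightarrow> bool" where
  "is_point_cell S \<longleftrightarrow> (\<exists>p. S = {p})"

definition is_hseg_cell :: "(real^3) set set \<Rightarrow> (real^3) set \<Rightarrow> bool" where
  "is_hseg_cell L S \<longleftrightarrow> (\<exists>a b. a \<noteq> b \<and> a$3 = b$3 \<and> S = open_segment a b
      \<and> {a} \<in> L \<and> {b} \<in> L)"

definition is_vseg_cell :: "(real^3) set set \<Rightarrow> (real^3) set \<Rightarrow> bool" where
  "is_vseg_cell L S \<longleftrightarrow> (\<exists>a b. a \<noteq> b \<and> a$1 = b$1 \<and> a$2 = b$2 \<and> S = open_segment a b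
      \<and> {a} \<in> L \<and> {b} \<in> L)"

definition is_htri_cell :: "(real^3) set set \<Rightarrow> (real^3) set \<Rightarrow> bool" where
  "is_htri_cell L S \<longleftrightarrow> (\<exists>a b c. \<not> collinear {a, b, c} \<and> a$3 = b$3 \<and> b$3 = c$3
      \<and> S = rel_interior (convex hull {a, b, c})
      \<and> open_segment a b \<in> L \<and> open_segment b c \<in> L \<and> open_segment a c \<in> L)"

definition is_vrect_cell :: "(real^3) set set \<Rightarrow> (real^3) set \<Rightarrow> bool" where
  "is_vrect_cell L S \<longleftrightarrow> (\<exists>a b t. a \<noteq> b \<and> a$3 = b$3 \<and> t > 0
      \<and> S = rel_interior (convex hull {a, b, a + t *\<^sub>R ez, b + t *\<^sub>R ez})
      \<and> open_segment a b \<in> L \<and> open_segment (a + t *\<^sub>R ez) (b + t *\<^sub>R ez) \<in> L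
      \<and> open_segment a (a + t *\<^sub>R ez) \<in> L \<and> open_segment b (b + t *\<^sub>R ez) \<in> L)"

definition is_lowdim_cell :: "(real^3) set set \<Rightarrow> (real^3) set \<Rightarrow> bool" where
  "is_lowdim_cell L S \<longleftrightarrow> is_point_cell S \<or> is_hseg_cell L S \<or> is_vseg_cell L S
      \<or> is_htri_cell L S \<or> is_vrect_cell L S"

definition is_open_cell :: "(real^3) set set \<Rightarrow> (real^3) set \<Rightarrow> bool" where
  "is_open_cell L S \<longleftrightarrow> open S \<and>
      (\<exists>M \<subseteq> L. (\<forall>T\<in>M. is_lowdim_cell L T) \<and> frontier S = \<Union>M)"

definition complex21 :: "(real^3) set \<Rightarrow> bool" where
  "complex21 K \<longleftrightarrow> closed K \<and> (\<exists>L. finite L \<and> K = \<Union>L \<and>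
      (\<forall>S\<in>L. is_lowdim_cell L S \<or> is_open_cell L S))"

definition extremal :: "(real^3) set \<Rightarrow> real^3 \<Rightarrow> bool" where
  "extremal K p \<longleftrightarrow> p \<in> K \<and> \<not> (\<exists>a b. a \<noteq> b \<and> (a$3 = b$3 \<or> (a$1 = b$1 \<and> a$2 = b$2))
      \<and> open_segment a b \<subseteq> K \<and> p \<in> open_segment a b)"

definition Extr :: "(real^3) set \<Rightarrow> (real^3) set" where
  "Extr K = {p. extremal K p}"

end

theory Submission
  imports Defs
begin

lemma not_extremal_dir:
  fixes p d :: "real^3"
  assumes "d \<noteq> 0" "d$3 = 0 \<or> (d$1 = 0 \<and> d$2 = 0)" "t > 0"
    "open_segment (p - t *\<^sub>R d) (p + t *\<^sub>R d) \<subseteq> K"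
  shows "\<not> extremal K p"
proof -
  let ?a = "p - t *\<^sub>R d" and ?b = "p + t *\<^sub>R d"
  have ne: "?a \<noteq> ?b"
  proof
    assume "?a = ?b"
    have "?b - ?a = 2 *\<^sub>R (t *\<^sub>R d)" by (auto simp: vec_eq_iff)
    with \<open>?a = ?b\<close> have "2 *\<^sub>R (t *\<^sub>R d) = 0" by (metis diff_self)
    hence "2 = (0::real) \<or> t = 0 \<or> d = 0" by (simp only: scaleR_eq_0_iff)
    thus False using assms(1,3) by linarith
  qed
  have "midpoint ?a ?b = p" by (auto simp: midpoint_def vec_eq_iff)
  hence pin: "p \<in> open_segment ?a ?b" using ne midpoint_in_open_segment by metis
  have "?a$3 = ?b$3 \<or> (?a$1 = ?b$1 \<and> ?a$2 = ?b$2)" using assms(2) by auto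
  thus ?thesis unfolding extremal_def using ne pin assms(4) by blast
qed

lemma not_extremal_relint:
  fixes p d :: "real^3"
  assumes "d \<noteq> 0" "d$3 = 0 \<or> (d$1 = 0 \<and> d$2 = 0)"
    "p \<in> rel_interior C" "C \<subseteq> K" "p + d \<in> affine hull C"
  shows "\<not> extremal K p"
proof -
  obtain e where e: "e > 0" "ball p e \<inter> affine hull C \<subseteq> C"
    using assms(3) mem_rel_interior_ball by blast
  define t where "t = e / (2 * norm d)"
  have nd: "norm d > 0" using assms(1) by simp
  have t: "t > 0" using e nd by (simp add: t_def)
  have "norm (t *\<^sub>R d) = t * norm d" using t by simp
  also have "\<dots> = e / 2" using nd by (simp add: t_def)
  finally have nt: "norm (t *\<^sub>R d) < e" using e by linarith
  have pC: "p \<in> C" using assms(3) rel_interior_subset by blast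
  have pA: "p \<in> affine hull C" using pC by (rule hull_inc)
  have a1: "p + t *\<^sub>R ((p + d) - p) \<in> affine hull C"
    by (rule mem_affine_3_minus[OF affine_affine_hull pA assms(5) pA])
  have a2: "p - t *\<^sub>R ((p + d) - p) \<in> affine hull C"
    by (rule mem_affine_3_minus2[OF affine_affine_hull pA assms(5) pA])
  have b1: "p + t *\<^sub>R d \<in> ball p e"
    unfolding mem_ball dist_norm using nt by simp
  have b2: "p - t *\<^sub>R d \<in> ball p e"
    unfolding mem_ball dist_norm using nt by simp
  have cv: "convex (ball p e \<inter> affine hull C)"
    by (intro convex_Int convex_ball affine_imp_convex affine_affine_hull)
  have "closed_segment (p - t *\<^sub>R d) (p + t *\<^sub>R d) \<subseteq> ball p e \<inter> affine hull C"
    by (rule closed_segment_subset[OF _ _ cv]) (use a1 a2 b1 b2 in simp_all)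
  hence "open_segment (p - t *\<^sub>R d) (p + t *\<^sub>R d) \<subseteq> C"
    using segment_open_subset_closed e(2) by blast
  hence "open_segment (p - t *\<^sub>R d) (p + t *\<^sub>R d) \<subseteq> K" using assms(4) by blast
  thus ?thesis using not_extremal_dir[OF assms(1,2) t] by blast
qed

theorem lemma2p3:
  fixes K :: "(real^3) set"
  assumes "complex21 K"
  shows "finite (Extr K)"
proof -
  obtain L where L: "finite L" "K = \<Union>L" "\<And>S. S\<in>L \<Longrightarrow> is_lowdim_cell L S \<or> is_open_cell L S"
    and cl: "closed K"
    using assms unfolding complex21_def by blast
  have cvx: "convex hull V \<subseteq> K" if "finite V" "rel_interior (convex hull V) \<subseteq> K" for V
  proof -
    have "closure (rel_interior (convex hull V)) = convex hull V"
      using convex_closure_rel_interior[of "convex hull V"]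
      by (simp add: compact_imp_closed compact_convex_hull finite_imp_compact that(1))
    thus ?thesis using closure_minimal[OF that(2) cl] by simp
  qed
  have key: "\<exists>S\<in>L. is_point_cell S \<and> p \<in> S" if ex: "extremal K p" for p
  proof (rule ccontr)
    assume nn: "\<not> ?thesis"
    from ex have "p \<in> K" by (simp add: extremal_def)
    then obtain S where S: "S \<in> L" "p \<in> S" using L(2) by blast
    have SK: "S \<subseteq> K" using S L(2) by blast
    have np: "\<not> is_point_cell S" using nn S by blast
    consider (h) "is_hseg_cell L S" | (v) "is_vseg_cell L S" | (tr) "is_htri_cell L S"
      | (r) "is_vrect_cell L S" | (o) "is_open_cell L S"
      using L(3)[OF S(1)] np unfolding is_lowdim_cell_def by blast
    then show False
    proof cases
      case h
      then obtain a b where "a \<noteq> b" "a$3 = b$3" "S = open_segment a b"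
        unfolding is_hseg_cell_def by blast
      thus False using ex S SK unfolding extremal_def by blast
    next
      case v
      then obtain a b where "a \<noteq> b" "a$1 = b$1" "a$2 = b$2" "S = open_segment a b"
        unfolding is_vseg_cell_def by blast
      thus False using ex S SK unfolding extremal_def by blast
    next
      case tr
      then obtain a b c where abc: "\<not> collinear {a, b, c}" "a$3 = b$3" "b$3 = c$3"
        "S = rel_interior (convex hull {a, b, c})"
        unfolding is_htri_cell_def by blast
      have ab: "a \<noteq> b"
      proof
        assume "a = b"
        hence "{a,b,c} = {b,c}" by simp
        thus False using abc(1) collinear_2 by metis
      qed
      have "rel_interior (convex hull {a,b,c}) \<subseteq> K" using abc(4) SK by blast
      have fin: "finite {a,b,c}" by simp
      from cvx[OF fin \<open>rel_interior (convex hull {a,b,c}) \<subseteq> K\<close>] have CK: "convex hull {a,b,c} \<subseteq> K" .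
      have "p + (b - a) \<in> affine hull (convex hull {a,b,c})"
      proof -
        have "p \<in> convex hull {a,b,c}" using S(2) abc(4) rel_interior_subset by blast
        then have pA: "p \<in> affine hull (convex hull {a,b,c})" by (rule hull_inc)
        have "a \<in> affine hull (convex hull {a,b,c})" "b \<in> affine hull (convex hull {a,b,c})"
          by (meson hull_inc hull_subset insertI1 insertI2 subsetD)+
        thus ?thesis using mem_affine_3_minus[OF affine_affine_hull pA, of b a 1] by simp
      qed
      moreover have "b - a \<noteq> 0" "(b - a)$3 = 0" using ab abc by auto
      ultimately show False using not_extremal_relint[of "b - a" p "convex hull {a,b,c}" K]
        S(2) abc(4) CK ex by blast
    next
      case r
      then obtain a b t where abt: "a \<noteq> b" "a$3 = b$3"
        "S = rel_interior (convex hull {a, b, a + t *\<^sub>R ez, b + t *\<^sub>R ez})"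
        unfolding is_vrect_cell_def by blast
      let ?V = "{a, b, a + t *\<^sub>R ez, b + t *\<^sub>R ez}"
      have "rel_interior (convex hull ?V) \<subseteq> K" using abt(3) SK by blast
      have fin: "finite ?V" by simp
      from cvx[OF fin \<open>rel_interior (convex hull ?V) \<subseteq> K\<close>] have CK: "convex hull ?V \<subseteq> K" .
      have "p + (b - a) \<in> affine hull (convex hull ?V)"
      proof -
        have "p \<in> convex hull ?V" using S(2) abt(3) rel_interior_subset by blast
        then have pA: "p \<in> affine hull (convex hull ?V)" by (rule hull_inc)
        have "a \<in> affine hull (convex hull ?V)" "b \<in> affine hull (convex hull ?V)"
          by (meson hull_inc hull_subset insertI1 insertI2 subsetD)+
        thus ?thesis using mem_affine_3_minus[OF affine_affine_hull pA, of b a 1] by simp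
      qed
      moreover have "b - a \<noteq> 0" "(b - a)$3 = 0" using abt by auto
      ultimately show False using not_extremal_relint[of "b - a" p "convex hull ?V" K]
        S(2) abt(3) CK ex by blast
    next
      case o
      hence "open S" by (simp add: is_open_cell_def)
      have ez0: "ez \<noteq> 0" "ez$1 = 0 \<and> ez$2 = 0" by (simp add: ez_def, simp add: ez_def axis_def)
      have "p \<in> rel_interior S" using \<open>open S\<close> S(2) by (simp add: rel_interior_open)
      moreover have "p + ez \<in> affine hull S"
        using \<open>open S\<close> S(2) by (metis UNIV_I affine_hull_open empty_iff)
      ultimately show False using not_extremal_relint[of ez p S K] ez0 SK ex by blast
    qed
  qed
  have "Extr K \<subseteq> \<Union>{S\<in>L. is_point_cell S}" using key unfolding Extr_def by blast
  moreover have "finite (\<Union>{S\<in>L. is_point_cell S})"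
    using L(1) by (auto simp: is_point_cell_def)
  ultimately show ?thesis using finite_subset by blast
qed

end
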